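(* Let $n$ robots, at most $f$ of them Byzantine, be placed at two distinct points $A<B$ of the real line: $p\ge 1$ robots at $A$ and $q \ge 1$ robots at $B$, with $p+q=n$. Suppose the robots run a deterministic cautious algorithm that solves Byzantine convergence with up to $f$ Byzantine robots in the ATOM model under a fully asynchronous scheduler. If $|p-q|\le f$, then: - when a correct robot at $A$ is activated, its computed destination lies in $(A,B]$; - when a correct robot at $B$ is activated, its computed destination lies in $[A,B)$.
   Context: Model: robots on the real line in the ATOM model (each activated robot performs a full Look–Compute–Move cycle atomically). Robots are anonymous (same deterministic program), oblivious, have no common orientation, and have unlimited visibility with strong multiplicity detection (an observation returns the multiset of all positions). Byzantine robots behave arbitrarily, with positions chosen by the adversary. A fully asynchronous scheduler only guarantees that each robot is activated infinitely often. Byzantine convergence: for every $\epsilon>0$ there is a time after which all correct robots are pairwise within distance $\epsilon$. Cautious algorithm: every computed destination of a correct robot lies in the range of the correct robots' positions in its last observation. In addition, whenever the correct robots are not colocated, some correct robot later has destination different from its position. *)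

theory Defs
  imports Complex_Main "HOL-Library.Multiset"
begin

text \<open>An algorithm maps an observation (multiset of positions,
expressed in the observing robot's local frame: origin at the robot's own position,
orientation s in {-1,1}) to a destination in that local frame.\<close>

type_synonym algo = "real multiset \<Rightarrow> real"

definition observe :: "nat \<Rightarrow> (nat \<Rightarrow> real) \<Rightarrow> real multiset" where
  "observe n c = image_mset c (mset_set {..<n})"

definition local_view :: "real \<Rightarrow> real \<Rightarrow> real multiset \<Rightarrow> real multiset" where
  "local_view s x M = image_mset (\<lambda>y. s * (y - x)) M"

definition dest :: "algo \<Rightarrow> real \<Rightarrow> real \<Rightarrow> real multiset \<Rightarrow> real" where
  "dest alg s x M = x + s * alg (local_view s x M)"

definition correct :: "nat \<Rightarrow> nat set \<Rightarrow> nat set" where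
  "correct n Byz = {i. i < n \<and> i \<notin> Byz}"

text \<open>ATOM execution under a fully asynchronous (fair) scheduler: at each step t the
subset act t of robots is activated and each activated correct robot atomically observes
and moves to its computed destination; Byzantine robots' positions are arbitrary.
orient i is the (fixed) orientation of robot i's local frame.\<close>
definition execution :: "algo \<Rightarrow> nat \<Rightarrow> nat set \<Rightarrow> (nat \<Rightarrow> real) \<Rightarrow> (nat \<Rightarrow> nat set)
    \<Rightarrow> (nat \<Rightarrow> nat \<Rightarrow> real) \<Rightarrow> bool" where
  "execution alg n Byz orient act C \<longleftrightarrow>
     (\<forall>i<n. orient i = 1 \<or> orient i = -1) \<and>
     (\<forall>i<n. \<exists>\<^sub>\<infinity>t. i \<in> act t) \<and>
     (\<forall>t. \<forall>i \<in> correct n Byz.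
        C (Suc t) i = (if i \<in> act t then dest alg (orient i) (C t i) (observe n (C t))
                       else C t i))"

definition admissible :: "nat \<Rightarrow> nat \<Rightarrow> nat set \<Rightarrow> bool" where
  "admissible n f Byz \<longleftrightarrow> Byz \<subseteq> {..<n} \<and> card Byz \<le> f"

definition converges :: "nat \<Rightarrow> nat set \<Rightarrow> (nat \<Rightarrow> nat \<Rightarrow> real) \<Rightarrow> bool" where
  "converges n Byz C \<longleftrightarrow>
     (\<forall>\<epsilon>>0. \<exists>T. \<forall>t\<ge>T. \<forall>i\<in>correct n Byz. \<forall>j\<in>correct n Byz. \<bar>C t i - C t j\<bar> \<le> \<epsilon>)"

definition solves_byz_convergence :: "algo \<Rightarrow> nat \<Rightarrow> nat \<Rightarrow> bool" where
  "solves_byz_convergence alg n f \<longleftrightarrow>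
     (\<forall>Byz orient act C. admissible n f Byz \<and> execution alg n Byz orient act C
        \<longrightarrow> converges n Byz C)"

definition cautious :: "algo \<Rightarrow> nat \<Rightarrow> nat \<Rightarrow> bool" where
  "cautious alg n f \<longleftrightarrow>
     (\<forall>Byz orient act C. admissible n f Byz \<and> execution alg n Byz orient act C \<longrightarrow>
        (\<forall>t. \<forall>i \<in> act t \<inter> correct n Byz.
            \<exists>j\<in>correct n Byz. \<exists>k\<in>correct n Byz.
              C t j \<le> dest alg (orient i) (C t i) (observe n (C t)) \<and>
              dest alg (orient i) (C t i) (observe n (C t)) \<le> C t k) \<and>
        (\<forall>t. (\<exists>j\<in>correct n Byz. \<exists>k\<in>correct n Byz. C t j \<noteq> C t k) \<longrightarrow>
            (\<exists>t'\<ge>t. \<exists>i \<in> act t' \<inter> correct n Byz.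
               dest alg (orient i) (C t' i) (observe n (C t')) \<noteq> C t' i)))"

end

theory Submission
  imports Defs "HOL-Library.Infinite_Set"
begin

lemma blk:
  assumes "\<forall>i\<in>{a..<b}. c i = x"
  shows "image_mset c (mset_set {a..<b::nat}) = replicate_mset (b-a) x"
proof -
  have "image_mset c (mset_set {a..<b}) = image_mset (\<lambda>_. x) (mset_set {a..<b})"
    by (rule image_mset_cong) (use assms in auto)
  also have "\<dots> = replicate_mset (b-a) x" by (simp add: image_mset_const_eq)
  finally show ?thesis .
qed

lemma rep_plus: "replicate_mset (a+b) x = replicate_mset a x + replicate_mset b x"
  by (induct a) auto

lemma splt:
  assumes "a \<le> b" "b \<le> (d::nat)"
  shows "mset_set {a..<d} = mset_set {a..<b} + mset_set {b..<d}"
proof -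
  have "{a..<d} = {a..<b} \<union> {b..<d}" using assms by auto
  thus ?thesis by (simp add: mset_set_Union)
qed

primrec run :: "algo \<Rightarrow> nat \<Rightarrow> (nat \<Rightarrow> real) \<Rightarrow> (nat \<Rightarrow> nat set) \<Rightarrow> (nat \<Rightarrow> real) \<Rightarrow> nat \<Rightarrow> nat \<Rightarrow> real" where
  "run alg n ori act c0 0 = c0"
| "run alg n ori act c0 (Suc t) = (\<lambda>i. if i \<in> act t then dest alg (ori i) (run alg n ori act c0 t i)
      (observe n (run alg n ori act c0 t)) else run alg n ori act c0 t i)"

lemma obs1:
  assumes "p + q = n"
  shows "observe n (\<lambda>i. if i < p then A else B) = replicate_mset p A + replicate_mset q B"
proof -
  have "observe n (\<lambda>i. if i < p then A else B) =
     image_mset (\<lambda>i. if i < p then A else B) (mset_set {0..<p} + mset_set {p..<n})"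
    unfolding observe_def using assms splt[of 0 p n] by (simp add: atLeast0LessThan[symmetric])
  also have "\<dots> = replicate_mset p A + replicate_mset q B"
    using assms[symmetric] blk[of 0 p "\<lambda>i. if i < p then A else B" A] blk[of p n "\<lambda>i. if i < p then A else B" B]
    by simp
  finally show ?thesis .
qed

lemma caut1:
  assumes "cautious alg n f" "admissible n f Byz" "execution alg n Byz orient act C"
    "i \<in> act t" "i \<in> correct n Byz"
  shows "\<exists>j\<in>correct n Byz. \<exists>k\<in>correct n Byz.
              C t j \<le> dest alg (orient i) (C t i) (observe n (C t)) \<and>
              dest alg (orient i) (C t i) (observe n (C t)) \<le> C t k"
proof -
  have "\<forall>t. \<forall>i \<in> act t \<inter> correct n Byz.
            \<exists>j\<in>correct n Byz. \<exists>k\<in>correct n Byz.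
              C t j \<le> dest alg (orient i) (C t i) (observe n (C t)) \<and>
              dest alg (orient i) (C t i) (observe n (C t)) \<le> C t k"
    using assms(1-3) unfolding cautious_def by blast
  thus ?thesis using assms(4,5) by blast
qed

lemma caut2:
  assumes "cautious alg n f" "admissible n f Byz" "execution alg n Byz orient act C"
    "j \<in> correct n Byz" "k \<in> correct n Byz" "C t j \<noteq> C t k"
  shows "\<exists>t'\<ge>t. \<exists>i \<in> act t' \<inter> correct n Byz.
               dest alg (orient i) (C t' i) (observe n (C t')) \<noteq> C t' i"
proof -
  have "\<forall>t. (\<exists>j\<in>correct n Byz. \<exists>k\<in>correct n Byz. C t j \<noteq> C t k) \<longrightarrow>
            (\<exists>t'\<ge>t. \<exists>i \<in> act t' \<inter> correct n Byz.
               dest alg (orient i) (C t' i) (observe n (C t')) \<noteq> C t' i)"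
    using assms(1-3) unfolding cautious_def by blast
  thus ?thesis using assms(4-6) by blast
qed

lemma A_side:
  fixes alg :: algo and n f p q :: nat and A B s :: real
  assumes AB: "A < B" and p1: "p \<ge> 1" and q1: "q \<ge> 1" and pq: "p + q = n"
    and pqf: "\<bar>int p - int q\<bar> \<le> int f"
    and caut: "cautious alg n f" and s: "s \<in> {1, -1}"
  shows "dest alg s A (replicate_mset p A + replicate_mset q B) \<in> {A<..B}"
proof -
  let ?M1 = "replicate_mset p A + replicate_mset q B"
  let ?c0 = "\<lambda>i::nat. if i < p then A else B"
  have obsc0: "observe n ?c0 = ?M1" using obs1[OF pq] .
  define C where "C = run alg n (\<lambda>_. s) (\<lambda>_. {..<n}) ?c0"
  have exe0: "execution alg n {} (\<lambda>_. s) (\<lambda>_. {..<n}) C"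
    unfolding execution_def C_def correct_def using s by (auto simp: INFM_nat)
  have adm0: "admissible n f {}" by (simp add: admissible_def)
  have "0 \<in> (\<lambda>_. {..<n}) 0 \<inter> correct n {}" using p1 pq by (auto simp: correct_def)
  then obtain j k where jk: "j \<in> correct n {}" "k \<in> correct n {}"
     "C 0 j \<le> dest alg s (C 0 0) (observe n (C 0))"
     "dest alg s (C 0 0) (observe n (C 0)) \<le> C 0 k"
    using caut1[OF caut adm0 exe0, of 0 0] by auto
  have C0: "C 0 = ?c0" by (simp add: C_def)
  have d0: "dest alg s (C 0 0) (observe n (C 0)) = dest alg s A ?M1"
    using p1 C0 obsc0 by simp
  have ge: "A \<le> dest alg s A ?M1" using jk(3) d0 C0 AB by (auto split: if_splits)
  have le: "dest alg s A ?M1 \<le> B" using jk(4) d0 C0 AB by (auto split: if_splits)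
  have ne: "dest alg s A ?M1 \<noteq> A"
  proof
    assume stay: "dest alg s A ?M1 = A"
    define m where "m = min p q"
    have m1: "m \<ge> 1" "m \<le> p" "m \<le> q" using p1 q1 by (auto simp: m_def)
    define Byz where "Byz = {m..<p} \<union> {p+m..<n}"
    define c2 where "c2 = (\<lambda>i. if i \<in> Byz then (if i < p then B else A) else ?c0 i)"
    define C where "C = (\<lambda>t::nat. if even t then ?c0 else c2)"
    define act where "act = (\<lambda>t::nat. if even t then {..<m} \<union> Byz else {p..<p+m} \<union> Byz)"
    define ori where "ori = (\<lambda>i::nat. if i < p then s else -s)"
    let ?M2 = "replicate_mset q A + replicate_mset p B"
    have obsc2: "observe n c2 = ?M2"
    proof -
      have "mset_set {..<n} = mset_set {0..<m} + mset_set {m..<p} + mset_set {p..<p+m} + mset_set {p+m..<n}"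
        using m1 pq splt[of 0 p n] splt[of 0 m p] splt[of p "p+m" n] by (simp add: atLeast0LessThan[symmetric])
      moreover have "image_mset c2 (mset_set {0..<m}) = replicate_mset m A"
        using blk[of 0 m c2 A] m1 by (simp add: c2_def Byz_def)
      moreover have "image_mset c2 (mset_set {m..<p}) = replicate_mset (p-m) B"
        using blk[of m p c2 B] m1 by (simp add: c2_def Byz_def)
      moreover have "image_mset c2 (mset_set {p..<p+m}) = replicate_mset m B"
        using blk[of p "p+m" c2 B] m1 by (simp add: c2_def Byz_def)
      moreover have "image_mset c2 (mset_set {p+m..<n}) = replicate_mset (n-(p+m)) A"
        using blk[of "p+m" n c2 A] m1 by (simp add: c2_def Byz_def)
      ultimately have "observe n c2 = replicate_mset m A + replicate_mset (p-m) B + replicate_mset m B + replicate_mset (n-(p+m)) A"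
        unfolding observe_def by simp
      also have "\<dots> = ?M2"
      proof -
        have "replicate_mset m A + replicate_mset (n-(p+m)) A = replicate_mset q A"
        proof -
          have e: "n-(p+m) = q-m" using pq m1 by linarith
          show ?thesis using e m1 rep_plus[of m "q-m" A] by simp
        qed
        moreover have "replicate_mset (p-m) B + replicate_mset m B = replicate_mset p B"
          using m1 rep_plus[of "p-m" m B] by simp
        ultimately show ?thesis by (metis add.commute add.left_commute)
      qed
      finally show ?thesis .
    qed
    have lv: "local_view (-s) B ?M2 = local_view s A ?M1"
      unfolding local_view_def by (simp add: algebra_simps add.commute)
    have stayB: "dest alg (-s) B ?M2 = B"
      using stay lv unfolding dest_def by simp
    have cor: "i \<in> correct n Byz \<longleftrightarrow> i < m \<or> (p \<le> i \<and> i < p + m)" for i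
      using m1 pq by (auto simp: correct_def Byz_def)
    have key: "dest alg (ori i) (C t i) (observe n (C t)) = C t i"
      if "i \<in> act t" "i \<in> correct n Byz" for t i
    proof -
      have nb: "i \<notin> Byz" using that(2) by (simp add: correct_def)
      show ?thesis
      proof (cases "even t")
        case True
        hence "i \<in> {..<m} \<union> Byz" using that(1) by (simp add: act_def)
        hence "i < m" using nb by simp
        hence i: "i < p" using m1 by simp
        have Ct: "C t = ?c0" using True by (simp add: C_def)
        have "ori i = s" using i by (simp add: ori_def)
        thus ?thesis using Ct i stay obsc0 by simp
      next
        case False
        hence "i \<in> {p..<p+m} \<union> Byz" using that(1) by (simp add: act_def)
        hence i: "p \<le> i" "i < p + m" using nb by auto
        have Ct: "C t = c2" using False by (simp add: C_def)
        have "c2 i = B" using i nb by (simp add: c2_def)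
        moreover have "ori i = -s" using i by (simp add: ori_def)
        ultimately show ?thesis using Ct stayB obsc2 by simp
      qed
    qed
    have corC: "C t i = ?c0 i" if "i \<in> correct n Byz" for t i
      using that by (auto simp: C_def c2_def correct_def)
    have exe: "execution alg n Byz ori act C"
      unfolding execution_def
    proof (intro conjI allI impI ballI)
      fix i assume "i < n"
      show "ori i = 1 \<or> ori i = -1" using s by (auto simp: ori_def)
    next
      fix i assume i: "i < n"
      have "i \<in> {..<m} \<union> Byz \<or> i \<in> {p..<p+m} \<union> Byz"
        using i m1 pq by (auto simp: Byz_def)
      thus "\<exists>\<^sub>\<infinity>t. i \<in> act t"
      proof
        assume h: "i \<in> {..<m} \<union> Byz"
        show ?thesis unfolding INFM_nat
        proof
          fix k show "\<exists>t>k. i \<in> act t" using h by (intro exI[of _ "2*k+2"]) (auto simp: act_def)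
        qed
      next
        assume h: "i \<in> {p..<p+m} \<union> Byz"
        show ?thesis unfolding INFM_nat
        proof
          fix k show "\<exists>t>k. i \<in> act t" using h by (intro exI[of _ "2*k+3"]) (auto simp: act_def)
        qed
      qed
    next
      fix t i assume i: "i \<in> correct n Byz"
      show "C (Suc t) i = (if i \<in> act t then dest alg (ori i) (C t i) (observe n (C t)) else C t i)"
        using key[OF _ i] corC[OF i] by auto
    qed
    have card: "card Byz \<le> f"
    proof -
      have "card Byz = (p - m) + (n - (p+m))"
        unfolding Byz_def using m1 pq by (subst card_Un_disjoint) auto
      thus ?thesis using pqf m1 pq unfolding m_def by (auto simp: min_def)
    qed
    have adm: "admissible n f Byz" using card pq by (auto simp: admissible_def Byz_def)
    have c0c: "0 \<in> correct n Byz" "p \<in> correct n Byz" using cor m1 by auto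
    have "C 0 0 \<noteq> C 0 p" using m1 AB by (simp add: C_def)
    then obtain t' i where "i \<in> act t' \<inter> correct n Byz"
        "dest alg (ori i) (C t' i) (observe n (C t')) \<noteq> C t' i"
      using caut2[OF caut adm exe c0c(1) c0c(2) \<open>C 0 0 \<noteq> C 0 p\<close>] by blast
    thus False using key by auto
  qed
  show ?thesis using ge le ne by auto
qed

theorem lemma5:
  fixes alg :: algo and n f p q :: nat and A B :: real
  assumes "A < B" and "p \<ge> 1" and "q \<ge> 1" and "p + q = n"
    and "\<bar>int p - int q\<bar> \<le> int f"
    and "cautious alg n f" and "solves_byz_convergence alg n f"
  shows "(\<forall>s\<in>{1, -1}. dest alg s A (replicate_mset p A + replicate_mset q B) \<in> {A<..B}) \<and>
         (\<forall>s\<in>{1, -1}. dest alg s B (replicate_mset p A + replicate_mset q B) \<in> {A..<B})"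
proof (intro conjI ballI)
  fix s :: real assume s: "s \<in> {1, -1}"
  show "dest alg s A (replicate_mset p A + replicate_mset q B) \<in> {A<..B}"
    using A_side[OF assms(1-6) s] .
next
  fix s :: real assume s: "s \<in> {1, -1}"
  have s': "-s \<in> {1, -1}" using s by auto
  have "\<bar>int q - int p\<bar> \<le> int f" using assms(5) by linarith
  from A_side[of "-B" "-A" q p n f alg "-s", OF _ assms(3,2) _ this assms(6) s'] assms(1,4)
  have h: "dest alg (-s) (-B) (replicate_mset q (-B) + replicate_mset p (-A)) \<in> {-B<..-A}"
    by simp
  have "local_view (-s) (-B) (replicate_mset q (-B) + replicate_mset p (-A)) =
        local_view s B (replicate_mset p A + replicate_mset q B)"
    unfolding local_view_def by (simp add: algebra_simps add.commute)
  hence "dest alg (-s) (-B) (replicate_mset q (-B) + replicate_mset p (-A)) =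
         - dest alg s B (replicate_mset p A + replicate_mset q B)"
    unfolding dest_def by simp
  with h show "dest alg s B (replicate_mset p A + replicate_mset q B) \<in> {A..<B}" by auto
qed

end
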